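(* Let $v\in\mathbb{Z}^d$ be primitive and $p$ a prime. Let $h\in H_v(\mathbb{Q}_p)\cap\mathrm{SO}_d(\mathbb{Z}_p)\mathrm{SO}_d(\mathbb{Z}[1/p])$, and write $h=c_1\gamma_1$ with $c_1\in\mathrm{SO}_d(\mathbb{Z}_p)$, $\gamma_1\in\mathrm{SO}_d(\mathbb{Z}[1/p])$, and $g_v^{-1}hg_v=c_2\gamma_2^{-1}$ with $c_2\in\mathrm{ASL}_{d-1}(\mathbb{Z}_p)$, $\gamma_2\in\mathrm{ASL}_{d-1}(\mathbb{Z}[1/p])$. Then $\gamma_1g_v\gamma_2\in\mathrm{SL}_d(\mathbb{Z})$.
   Context: For primitive $v\in\mathbb{Z}^d$: $\Lambda_v=v^\perp\cap\mathbb{Z}^d$; $H_v\le\mathrm{SO}_d$ is the stabilizer of $v$ (a $\mathbb{Q}$-algebraic group); $g_v\in\mathrm{SL}_d(\mathbb{Z})$ is a matrix whose first $d-1$ columns form a positively oriented $\mathbb{Z}$-basis of $\Lambda_v$. $\mathrm{ASL}_{d-1}=\{\begin{pmatrix}g&*\\0&1\end{pmatrix}:g\in\mathrm{SL}_{d-1}\}\le\mathrm{SL}_d$; one has $g_v^{-1}H_vg_v\le\mathrm{ASL}_{d-1}$ and $\mathrm{ASL}_{d-1}(\mathbb{Q}_p)=\mathrm{ASL}_{d-1}(\mathbb{Z}_p)\mathrm{ASL}_{d-1}(\mathbb{Z}[1/p])$, so such decompositions exist. *)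

theory Defs
  imports Complex_Main "HOL-Computational_Algebra.Factorial_Ring" "Jordan_Normal_Form.Determinant"
begin

definition pval :: "nat \<Rightarrow> rat \<Rightarrow> int" where
  "pval p q = (case quotient_of q of (a, b) \<Rightarrow>
      int (multiplicity (int p) a) - int (multiplicity (int p) b))"

definition pnorm :: "nat \<Rightarrow> rat \<Rightarrow> real" where
  "pnorm p q = (if q = 0 then 0 else real p powr (- real_of_int (pval p q)))"

definition in_Zinvp :: "nat \<Rightarrow> rat \<Rightarrow> bool" where
  "in_Zinvp p q \<longleftrightarrow> (\<exists>(a::int) (k::nat). q = of_int a / of_nat p ^ k)"

section \<open>Matrices over Q_p, modelled as p-adic Cauchy sequences of rational matrices
  (Q_p = completion of Q with respect to pnorm)\<close>

definition padic_null_seq :: "nat \<Rightarrow> (nat \<Rightarrow> rat) \<Rightarrow> bool" where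
  "padic_null_seq p x \<longleftrightarrow> (\<forall>\<epsilon>>0. \<exists>N. \<forall>k\<ge>N. pnorm p (x k) < \<epsilon>)"

definition padic_cauchy :: "nat \<Rightarrow> nat \<Rightarrow> nat \<Rightarrow> (nat \<Rightarrow> rat mat) \<Rightarrow> bool" where
  "padic_cauchy p m n X \<longleftrightarrow> (\<forall>k. X k \<in> carrier_mat m n) \<and>
     (\<forall>\<epsilon>>0. \<exists>N. \<forall>k\<ge>N. \<forall>l\<ge>N. \<forall>i<m. \<forall>j<n. pnorm p (X k $$ (i, j) - X l $$ (i, j)) < \<epsilon>)"

definition padic_eq :: "nat \<Rightarrow> nat \<Rightarrow> nat \<Rightarrow> (nat \<Rightarrow> rat mat) \<Rightarrow> (nat \<Rightarrow> rat mat) \<Rightarrow> bool" where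
  "padic_eq p m n X Y \<longleftrightarrow> (\<forall>i<m. \<forall>j<n. padic_null_seq p (\<lambda>k. X k $$ (i, j) - Y k $$ (i, j)))"

definition padic_integral :: "nat \<Rightarrow> nat \<Rightarrow> nat \<Rightarrow> (nat \<Rightarrow> rat mat) \<Rightarrow> bool" where
  "padic_integral p m n X \<longleftrightarrow> (\<exists>N. \<forall>k\<ge>N. \<forall>i<m. \<forall>j<n. pnorm p (X k $$ (i, j)) \<le> 1)"

definition SO_Qp :: "nat \<Rightarrow> nat \<Rightarrow> (nat \<Rightarrow> rat mat) \<Rightarrow> bool" where
  "SO_Qp p d X \<longleftrightarrow> padic_cauchy p d d X
     \<and> padic_eq p d d (\<lambda>k. transpose_mat (X k) * X k) (\<lambda>k. 1\<^sub>m d)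
     \<and> padic_null_seq p (\<lambda>k. det (X k) - 1)"

definition SO_Zp :: "nat \<Rightarrow> nat \<Rightarrow> (nat \<Rightarrow> rat mat) \<Rightarrow> bool" where
  "SO_Zp p d X \<longleftrightarrow> SO_Qp p d X \<and> padic_integral p d d X"

definition SO_Zinvp :: "nat \<Rightarrow> nat \<Rightarrow> rat mat \<Rightarrow> bool" where
  "SO_Zinvp p d A \<longleftrightarrow> A \<in> carrier_mat d d \<and> (\<forall>i<d. \<forall>j<d. in_Zinvp p (A $$ (i, j)))
     \<and> transpose_mat A * A = 1\<^sub>m d \<and> det A = 1"

definition H_Qp :: "nat \<Rightarrow> nat \<Rightarrow> int vec \<Rightarrow> (nat \<Rightarrow> rat mat) \<Rightarrow> bool" where
  "H_Qp p d v X \<longleftrightarrow> SO_Qp p d X \<and>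
     padic_eq p d 1 (\<lambda>k. X k * mat_of_cols d [map_vec rat_of_int v])
                    (\<lambda>k. mat_of_cols d [map_vec rat_of_int v])"

definition ASL_Qp :: "nat \<Rightarrow> nat \<Rightarrow> (nat \<Rightarrow> rat mat) \<Rightarrow> bool" where
  "ASL_Qp p d X \<longleftrightarrow> padic_cauchy p d d X
     \<and> (\<forall>j<d - 1. padic_null_seq p (\<lambda>k. X k $$ (d - 1, j)))
     \<and> padic_null_seq p (\<lambda>k. X k $$ (d - 1, d - 1) - 1)
     \<and> padic_null_seq p (\<lambda>k. det (X k) - 1)"

definition ASL_Zp :: "nat \<Rightarrow> nat \<Rightarrow> (nat \<Rightarrow> rat mat) \<Rightarrow> bool" where
  "ASL_Zp p d X \<longleftrightarrow> ASL_Qp p d X \<and> padic_integral p d d X"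

definition ASL_Zinvp :: "nat \<Rightarrow> nat \<Rightarrow> rat mat \<Rightarrow> bool" where
  "ASL_Zinvp p d A \<longleftrightarrow> A \<in> carrier_mat d d \<and> (\<forall>i<d. \<forall>j<d. in_Zinvp p (A $$ (i, j)))
     \<and> (\<forall>j<d - 1. A $$ (d - 1, j) = 0) \<and> A $$ (d - 1, d - 1) = 1 \<and> det A = 1"

definition primitive_vec :: "nat \<Rightarrow> int vec \<Rightarrow> bool" where
  "primitive_vec d v \<longleftrightarrow> v \<in> carrier_vec d \<and> (\<forall>c. (\<forall>i<d. c dvd v $ i) \<longrightarrow> is_unit c)"

text \<open>g is in SL_d(Z) and its first d-1 columns form a positively oriented Z-basis of
  Lambda_v = v^perp \<inter> Z^d (orientation: det(b_1,...,b_{d-1},v) > 0).\<close>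
definition is_gv :: "nat \<Rightarrow> int vec \<Rightarrow> int mat \<Rightarrow> bool" where
  "is_gv d v g \<longleftrightarrow> g \<in> carrier_mat d d \<and> det g = 1
     \<and> (\<forall>j<d - 1. col g j \<bullet> v = 0)
     \<and> (\<forall>x \<in> carrier_vec d. x \<bullet> v = 0 \<longrightarrow>
          (\<exists>c :: nat \<Rightarrow> int. \<forall>i<d. x $ i = (\<Sum>j<d - 1. c j * g $$ (i, j))))
     \<and> det (mat_of_cols d (map (col g) [0..<d - 1] @ [v])) > 0"

end

theory Submission
  imports Defs
begin

lemma pval_frac:
  fixes a b :: int
  assumes p: "prime p" and a: "a \<noteq> 0" and b: "b \<noteq> 0"
  shows "pval p (of_int a / of_int b) = int (multiplicity (int p) a) - int (multiplicity (int p) b)"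
proof -
  obtain a' b' where q: "quotient_of (of_int a / of_int b) = (a', b')" by (cases "quotient_of (of_int a / of_int b :: rat)") auto
  have eq: "(of_int a / of_int b :: rat) = of_int a' / of_int b'" using quotient_of_div[OF q] .
  have b': "b' > 0" using quotient_of_denom_pos[OF q] .
  have "(of_int a / of_int b :: rat) \<noteq> 0" using a b by simp
  hence a': "a' \<noteq> 0" using eq by auto
  have "(of_int a * of_int b' :: rat) = of_int a' * of_int b" using eq b b' by (simp add: field_simps)
  hence ab: "a * b' = a' * b" by (metis of_int_eq_iff of_int_mult)
  have pe: "prime_elem (int p)" using p by simp
  have "multiplicity (int p) (a * b') = multiplicity (int p) (a' * b)" using ab by simp
  hence "multiplicity (int p) a + multiplicity (int p) b' = multiplicity (int p) a' + multiplicity (int p) b"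
    using prime_elem_multiplicity_mult_distrib[OF pe] a b a' b' by simp
  thus ?thesis unfolding pval_def q by simp
qed

lemma rat_frac: fixes q :: rat obtains a b :: int where "b \<noteq> 0" "q = of_int a / of_int b"
proof -
  obtain a b where q: "quotient_of q = (a, b)" by (cases "quotient_of q") auto
  show ?thesis using quotient_of_denom_pos[OF q] quotient_of_div[OF q] by (intro that[of b a]) auto
qed

lemma pval_mult:
  assumes p: "prime p" and x: "x \<noteq> 0" and y: "y \<noteq> 0"
  shows "pval p (x * y) = pval p x + pval p y"
proof -
  obtain a b where ab: "b \<noteq> 0" "x = of_int a / of_int b" by (rule rat_frac)
  obtain c d where cd: "d \<noteq> 0" "y = of_int c / of_int d" by (rule rat_frac)
  have a: "a \<noteq> 0" using x ab by auto
  have c: "c \<noteq> 0" using y cd by auto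
  have pe: "prime_elem (int p)" using p by simp
  have e: "x * y = of_int (a*c) / of_int (b*d)" using ab cd by simp
  have "pval p (x*y) = int (multiplicity (int p) (a*c)) - int (multiplicity (int p) (b*d))"
    unfolding e by (rule pval_frac[OF p]) (use a c ab cd in auto)
  thus ?thesis using pval_frac[OF p] a c ab cd prime_elem_multiplicity_mult_distrib[OF pe] by simp
qed

lemma mult_add_ge:
  fixes u w :: int
  assumes p: "prime p" and uw: "u + w \<noteq> 0"
  shows "multiplicity (int p) (u + w) \<ge> min (multiplicity (int p) u) (multiplicity (int p) w)"
proof -
  have pe: "prime_elem (int p)" using p by simp
  have nu: "\<not> is_unit (int p)" using prime_elem_not_unit[OF pe] .
  let ?k = "min (multiplicity (int p) u) (multiplicity (int p) w)"
  have "int p ^ ?k dvd u" by (rule multiplicity_dvd') simp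
  moreover have "int p ^ ?k dvd w" by (rule multiplicity_dvd') simp
  ultimately have "int p ^ ?k dvd u + w" by simp
  thus ?thesis using multiplicity_geI[OF uw nu] by blast
qed

lemma pval_add:
  assumes p: "prime p" and x: "x \<noteq> 0" and y: "y \<noteq> 0" and xy: "x + y \<noteq> 0"
  shows "pval p (x + y) \<ge> min (pval p x) (pval p y)"
proof -
  obtain a b where ab: "b \<noteq> 0" "x = of_int a / of_int b" by (rule rat_frac)
  obtain c d where cd: "d \<noteq> 0" "y = of_int c / of_int d" by (rule rat_frac)
  have a: "a \<noteq> 0" using x ab by auto
  have c: "c \<noteq> 0" using y cd by auto
  have pe: "prime_elem (int p)" using p by simp
  have e: "x + y = of_int (a*d + c*b) / of_int (b*d)" using ab cd by (simp add: field_simps)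
  have nz: "a*d + c*b \<noteq> 0"
  proof
    assume h: "a*d + c*b = 0"
    have "x + y = of_int 0 / of_int (b*d)" using e h by (simp only:)
    thus False using xy by simp
  qed
  have 1: "pval p (x+y) = int (multiplicity (int p) (a*d + c*b)) - int (multiplicity (int p) (b*d))"
    unfolding e by (rule pval_frac[OF p nz]) (use ab cd in auto)
  have 2: "multiplicity (int p) (a*d + c*b) \<ge> min (multiplicity (int p) (a*d)) (multiplicity (int p) (c*b))"
    by (rule mult_add_ge[OF p nz])
  show ?thesis using 1 2 pval_frac[OF p] a c ab cd prime_elem_multiplicity_mult_distrib[OF pe] by auto
qed

lemma pnorm_nonneg: "pnorm p x \<ge> 0" unfolding pnorm_def by simp
lemma pnorm_zero[simp]: "pnorm p 0 = 0" unfolding pnorm_def by simp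

lemma pnorm_mult: assumes p: "prime p" shows "pnorm p (x * y) = pnorm p x * pnorm p y"
proof (cases "x = 0 \<or> y = 0")
  case True thus ?thesis by auto
next
  case False
  have "p > 0" using p prime_gt_0_nat by blast
  thus ?thesis using False pval_mult[OF p, of x y] unfolding pnorm_def
    by (simp add: powr_add[symmetric])
qed

lemma pnorm_add: assumes p: "prime p" shows "pnorm p (x + y) \<le> max (pnorm p x) (pnorm p y)"
proof (cases "x = 0 \<or> y = 0 \<or> x + y = 0")
  case True thus ?thesis using pnorm_nonneg[of p x] pnorm_nonneg[of p y] by (auto simp: le_max_iff_disj)
next
  case False
  have "p > 1" using p prime_gt_1_nat by blast
  have m: "pval p (x+y) \<ge> min (pval p x) (pval p y)" using pval_add[OF p, of x y] False by auto
  have "real p powr (- real_of_int (pval p (x+y))) \<le> real p powr (- real_of_int (min (pval p x) (pval p y)))"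
    by (rule powr_mono) (use m \<open>p > 1\<close> in auto)
  also have "\<dots> \<le> max (real p powr (- real_of_int (pval p x))) (real p powr (- real_of_int (pval p y)))"
    by (cases "pval p x \<le> pval p y") (auto simp: min_def le_max_iff_disj)
  finally have "real p powr (- real_of_int (pval p (x+y))) \<le> max (real p powr (- real_of_int (pval p x))) (real p powr (- real_of_int (pval p y)))" .
  thus ?thesis using False unfolding pnorm_def by simp
qed

lemma pnorm_minus: assumes p: "prime p" shows "pnorm p (- x) = pnorm p x"
proof (cases "x = 0")
  case False
  obtain a b where ab: "b \<noteq> 0" "x = of_int a / of_int b" by (rule rat_frac)
  have a: "a \<noteq> 0" using False ab by auto
  have e: "- x = of_int (-a) / of_int b" using ab by simp
  have "multiplicity (int p) (-a) = multiplicity (int p) ((-1) * a)" by simp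
  also have "\<dots> = multiplicity (int p) a" by (rule multiplicity_times_unit_right) simp
  finally have "pval p (-x) = pval p x"
    unfolding e using pval_frac[OF p, of "-a" b] pval_frac[OF p, of a b] a ab by simp
  thus ?thesis unfolding pnorm_def by simp
qed simp

lemma pnorm_diff: assumes p: "prime p" shows "pnorm p (x - y) \<le> max (pnorm p x) (pnorm p y)"
  using pnorm_add[OF p, of x "-y"] pnorm_minus[OF p, of y] by simp

lemma pnorm_int: assumes p: "prime p" shows "pnorm p (of_int n) \<le> 1"
proof (cases "n = 0")
  case False
  have "p > 1" using p prime_gt_1_nat by blast
  have "pval p (of_int n) = int (multiplicity (int p) n)"
    using pval_frac[OF p False, of 1] by simp
  moreover have "real p powr (- real (multiplicity (int p) n)) \<le> real p powr 0"
    by (rule powr_mono) (use \<open>p > 1\<close> in auto)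
  ultimately show ?thesis using \<open>p > 1\<close> False unfolding pnorm_def by simp
qed simp


lemma pnorm_le1_pval:
  assumes p: "prime p" and q: "q \<noteq> 0" and le: "pnorm p q \<le> 1"
  shows "pval p q \<ge> 0"
proof (rule ccontr)
  assume "\<not> pval p q \<ge> 0"
  hence neg: "- real_of_int (pval p q) > 0" by simp
  have "p > 1" using p prime_gt_1_nat by blast
  hence "real p powr (- real_of_int (pval p q)) > real p powr 0"
    by (intro powr_less_mono) (use neg in auto)
  thus False using le q \<open>p > 1\<close> unfolding pnorm_def by simp
qed

lemma Zinvp_int:
  assumes p: "prime p" and z: "in_Zinvp p q" and le: "pnorm p q \<le> 1"
  shows "\<exists>n::int. q = of_int n"
proof (cases "q = 0")
  case True thus ?thesis by (intro exI[of _ 0]) simp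
next
  case False
  obtain a k where ak: "q = of_int a / of_nat p ^ k" using z unfolding in_Zinvp_def by blast
  have a: "a \<noteq> 0" using False ak by auto
  have pe: "prime_elem (int p)" using p by simp
  have p0: "int p ^ k \<noteq> 0" using p by (simp add: prime_gt_0_nat)
  have e: "q = of_int a / of_int (int p ^ k)" using ak by simp
  have "pval p q = int (multiplicity (int p) a) - int (multiplicity (int p) (int p ^ k))"
    unfolding e by (rule pval_frac[OF p a p0])
  also have "multiplicity (int p) (int p ^ k) = k"
    using pe p by (simp add: multiplicity_same_power prime_elem_not_unit prime_gt_0_nat)
  finally have "int (multiplicity (int p) a) - int k \<ge> 0" using pnorm_le1_pval[OF p False le] by simp
  hence "int p ^ k dvd a" by (intro multiplicity_dvd') simp
  then obtain c where c: "a = int p ^ k * c" by blast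
  have "(of_int (int p ^ k) :: rat) \<noteq> 0" using p0 by (simp only: of_int_eq_0_iff) simp
  hence "q = of_int c" using e c by (simp only: of_int_mult) simp
  thus ?thesis by blast
qed

lemma Zinvp_int_in: "in_Zinvp p (of_int n)"
  unfolding in_Zinvp_def by (intro exI[of _ n] exI[of _ 0]) simp

lemma Zinvp_add: assumes p: "prime p" "in_Zinvp p x" "in_Zinvp p y" shows "in_Zinvp p (x + y)"
proof -
  obtain a k where x: "x = of_int a / of_nat p ^ k" using assms unfolding in_Zinvp_def by blast
  obtain b l where y: "y = of_int b / of_nat p ^ l" using assms unfolding in_Zinvp_def by blast
  have p0: "(of_nat p :: rat) \<noteq> 0" using p by (simp add: prime_gt_0_nat)
  have "x + y = of_int (a * int p ^ l + b * int p ^ k) / of_nat p ^ (k + l)"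
    using p0 unfolding x y by (simp add: field_simps power_add)
  thus ?thesis unfolding in_Zinvp_def by blast
qed

lemma Zinvp_mult: assumes p: "prime p" "in_Zinvp p x" "in_Zinvp p y" shows "in_Zinvp p (x * y)"
proof -
  obtain a k where x: "x = of_int a / of_nat p ^ k" using assms unfolding in_Zinvp_def by blast
  obtain b l where y: "y = of_int b / of_nat p ^ l" using assms unfolding in_Zinvp_def by blast
  have "x * y = of_int (a * b) / of_nat p ^ (k + l)"
    unfolding x y by (simp add: power_add)
  thus ?thesis unfolding in_Zinvp_def by blast
qed

lemma Zinvp_sum: assumes p: "prime p" shows "finite S \<Longrightarrow> (\<And>l. l \<in> S \<Longrightarrow> in_Zinvp p (f l)) \<Longrightarrow> in_Zinvp p (\<Sum>l\<in>S. f l)"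
proof (induction S rule: finite_induct)
  case empty thus ?case using Zinvp_int_in[of p 0] by simp
next
  case (insert a F) thus ?case using Zinvp_add[OF p] by simp
qed

lemma pnorm_sum: assumes p: "prime p" and B: "B \<ge> 0"
  shows "finite S \<Longrightarrow> (\<And>l. l \<in> S \<Longrightarrow> pnorm p (f l) \<le> B) \<Longrightarrow> pnorm p (\<Sum>l\<in>S. f l) \<le> B"
proof (induction S rule: finite_induct)
  case empty thus ?case using B by simp
next
  case (insert a F)
  have "pnorm p (\<Sum>l\<in>insert a F. f l) = pnorm p (f a + (\<Sum>l\<in>F. f l))" using insert by simp
  also have "\<dots> \<le> max (pnorm p (f a)) (pnorm p (\<Sum>l\<in>F. f l))" by (rule pnorm_add[OF p])
  also have "\<dots> \<le> B" using insert by simp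
  finally show ?case .
qed

lemma mult_entry:
  assumes "A \<in> carrier_mat m n" "B \<in> carrier_mat n r" "i < m" "j < r"
  shows "(A * B) $$ (i, j) = (\<Sum>l<n. A $$ (i, l) * B $$ (l, j))"
  using assms by (simp add: scalar_prod_def atLeast0LessThan)

lemma mat_Zinvp:
  assumes p: "prime p" and A: "A \<in> carrier_mat m n" and B: "B \<in> carrier_mat n r"
    and zA: "\<forall>i<m. \<forall>j<n. in_Zinvp p (A $$ (i, j))" and zB: "\<forall>i<n. \<forall>j<r. in_Zinvp p (B $$ (i, j))"
  shows "\<forall>i<m. \<forall>j<r. in_Zinvp p ((A * B) $$ (i, j))"
proof (intro allI impI)
  fix i j assume ij: "i < m" "j < r"
  show "in_Zinvp p ((A * B) $$ (i, j))" unfolding mult_entry[OF A B ij]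
    using ij zA zB by (intro Zinvp_sum[OF p] Zinvp_mult[OF p]) auto
qed

section \<open>null sequences\<close>

lemma null_add: assumes p: "prime p" and x: "padic_null_seq p x" and y: "padic_null_seq p y"
  shows "padic_null_seq p (\<lambda>k. x k + y k)"
  unfolding padic_null_seq_def
proof (intro allI impI)
  fix e :: real assume e: "e > 0"
  obtain N1 where N1: "\<forall>k\<ge>N1. pnorm p (x k) < e" using x e unfolding padic_null_seq_def by blast
  obtain N2 where N2: "\<forall>k\<ge>N2. pnorm p (y k) < e" using y e unfolding padic_null_seq_def by blast
  show "\<exists>N. \<forall>k\<ge>N. pnorm p (x k + y k) < e"
  proof (intro exI[of _ "max N1 N2"] allI impI)
    fix k assume "k \<ge> max N1 N2"
    thus "pnorm p (x k + y k) < e" using N1 N2 pnorm_add[OF p, of "x k" "y k"] by fastforce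
  qed
qed

lemma null_mult: assumes p: "prime p" and x: "padic_null_seq p x" and y: "\<exists>B N. \<forall>k\<ge>N. pnorm p (y k) \<le> B"
  shows "padic_null_seq p (\<lambda>k. x k * y k)"
  unfolding padic_null_seq_def
proof (intro allI impI)
  fix e :: real assume e: "e > 0"
  obtain B N0 where B0: "\<forall>k\<ge>N0. pnorm p (y k) \<le> B" using y by blast
  define B' where "B' = max B 1"
  have B': "B' > 0" "\<forall>k\<ge>N0. pnorm p (y k) \<le> B'" using B0 unfolding B'_def by force+
  have eB: "e / B' > 0" using e B' by simp
  obtain N1 where N1: "\<forall>k\<ge>N1. pnorm p (x k) < e / B'" using x eB unfolding padic_null_seq_def by blast
  show "\<exists>N. \<forall>k\<ge>N. pnorm p (x k * y k) < e"
  proof (intro exI[of _ "max N0 N1"] allI impI)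
    fix k assume k: "k \<ge> max N0 N1"
    have "pnorm p (x k * y k) = pnorm p (x k) * pnorm p (y k)" by (rule pnorm_mult[OF p])
    also have "\<dots> \<le> pnorm p (x k) * B'" using k B' by (intro mult_left_mono) (auto simp: pnorm_nonneg)
    also have "\<dots> < e / B' * B'" using k N1 B' by (intro mult_strict_right_mono) auto
    also have "\<dots> = e" using B' by simp
    finally show "pnorm p (x k * y k) < e" .
  qed
qed

lemma null_zero: "padic_null_seq p (\<lambda>k. 0)"
  unfolding padic_null_seq_def by simp

lemma null_sum: assumes p: "prime p"
  shows "finite S \<Longrightarrow> (\<And>l. l \<in> S \<Longrightarrow> padic_null_seq p (f l)) \<Longrightarrow> padic_null_seq p (\<lambda>k. \<Sum>l\<in>S. f l k)"
proof (induction S rule: finite_induct)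
  case empty thus ?case using null_zero by simp
next
  case (insert a F)
  have "padic_null_seq p (\<lambda>k. f a k + (\<Sum>l\<in>F. f l k))" using insert null_add[OF p] by simp
  thus ?case using insert by simp
qed


section \<open>matrix sequences\<close>

lemma eq_sym: assumes p: "prime p" and e: "padic_eq p m n X Y" shows "padic_eq p m n Y X"
  unfolding padic_eq_def padic_null_seq_def
proof (intro allI impI)
  fix i j and ep :: real assume ij: "i < m" "j < n" and ep: "ep > 0"
  obtain N where N: "\<forall>k\<ge>N. pnorm p (X k $$ (i, j) - Y k $$ (i, j)) < ep"
    using e ij ep unfolding padic_eq_def padic_null_seq_def by blast
  show "\<exists>N. \<forall>k\<ge>N. pnorm p (Y k $$ (i, j) - X k $$ (i, j)) < ep"
    using N pnorm_minus[OF p, of "X _ $$ (i, j) - Y _ $$ (i, j)"] by (intro exI[of _ N]) simp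
qed

lemma eq_trans: assumes p: "prime p" and e1: "padic_eq p m n X Y" and e2: "padic_eq p m n Y Z"
  shows "padic_eq p m n X Z"
  unfolding padic_eq_def
proof (intro allI impI)
  fix i j assume ij: "i < m" "j < n"
  have "padic_null_seq p (\<lambda>k. (X k $$ (i, j) - Y k $$ (i, j)) + (Y k $$ (i, j) - Z k $$ (i, j)))"
    using e1 e2 ij unfolding padic_eq_def by (intro null_add[OF p]) auto
  thus "padic_null_seq p (\<lambda>k. X k $$ (i, j) - Z k $$ (i, j))" by simp
qed

lemma eq_mult_right:
  assumes p: "prime p" and X: "\<And>k. X k \<in> carrier_mat m n" and Y: "\<And>k. Y k \<in> carrier_mat m n"
    and Z: "\<And>k. Z k \<in> carrier_mat n r" and e: "padic_eq p m n X Y"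
    and b: "\<exists>B N. \<forall>k\<ge>N. \<forall>i<n. \<forall>j<r. pnorm p (Z k $$ (i, j)) \<le> B"
  shows "padic_eq p m r (\<lambda>k. X k * Z k) (\<lambda>k. Y k * Z k)"
  unfolding padic_eq_def
proof (intro allI impI)
  fix i j assume ij: "i < m" "j < r"
  have "padic_null_seq p (\<lambda>k. \<Sum>l<n. (X k $$ (i, l) - Y k $$ (i, l)) * Z k $$ (l, j))"
  proof (rule null_sum[OF p], simp, rule null_mult[OF p])
    fix l assume l: "l \<in> {..<n}"
    show "padic_null_seq p (\<lambda>k. X k $$ (i, l) - Y k $$ (i, l))" using e ij l unfolding padic_eq_def by auto
    show "\<exists>B N. \<forall>k\<ge>N. pnorm p (Z k $$ (l, j)) \<le> B" using b ij l by blast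
  qed
  moreover have "\<And>k. (X k * Z k) $$ (i, j) - (Y k * Z k) $$ (i, j) = (\<Sum>l<n. (X k $$ (i, l) - Y k $$ (i, l)) * Z k $$ (l, j))"
    by (simp add: mult_entry[OF X Z ij] mult_entry[OF Y Z ij] sum_subtractf[symmetric] algebra_simps)
  ultimately show "padic_null_seq p (\<lambda>k. (X k * Z k) $$ (i, j) - (Y k * Z k) $$ (i, j))" by simp
qed

lemma eq_mult_left:
  assumes p: "prime p" and X: "\<And>k. X k \<in> carrier_mat n r" and Y: "\<And>k. Y k \<in> carrier_mat n r"
    and Z: "\<And>k. Z k \<in> carrier_mat m n" and e: "padic_eq p n r X Y"
    and b: "\<exists>B N. \<forall>k\<ge>N. \<forall>i<m. \<forall>j<n. pnorm p (Z k $$ (i, j)) \<le> B"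
  shows "padic_eq p m r (\<lambda>k. Z k * X k) (\<lambda>k. Z k * Y k)"
  unfolding padic_eq_def
proof (intro allI impI)
  fix i j assume ij: "i < m" "j < r"
  have "padic_null_seq p (\<lambda>k. \<Sum>l<n. (X k $$ (l, j) - Y k $$ (l, j)) * Z k $$ (i, l))"
  proof (rule null_sum[OF p], simp, rule null_mult[OF p])
    fix l assume l: "l \<in> {..<n}"
    show "padic_null_seq p (\<lambda>k. X k $$ (l, j) - Y k $$ (l, j))" using e ij l unfolding padic_eq_def by auto
    show "\<exists>B N. \<forall>k\<ge>N. pnorm p (Z k $$ (i, l)) \<le> B" using b ij l by blast
  qed
  moreover have "\<And>k. (Z k * X k) $$ (i, j) - (Z k * Y k) $$ (i, j) = (\<Sum>l<n. (X k $$ (l, j) - Y k $$ (l, j)) * Z k $$ (i, l))"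
    by (simp add: mult_entry[OF Z X ij] mult_entry[OF Z Y ij] sum_subtractf[symmetric] algebra_simps)
  ultimately show "padic_null_seq p (\<lambda>k. (Z k * X k) $$ (i, j) - (Z k * Y k) $$ (i, j))" by simp
qed

lemma bnd_integral: "padic_integral p m n X \<Longrightarrow> \<exists>B N. \<forall>k\<ge>N. \<forall>i<m. \<forall>j<n. pnorm p (X k $$ (i, j)) \<le> B"
  unfolding padic_integral_def by blast

lemma entry_le_sum:
  assumes ij: "i < m" "j < n"
  shows "pnorm p (A $$ (i, j)) \<le> (\<Sum>i<m. \<Sum>j<n. pnorm p (A $$ (i, j)))"
proof -
  have "pnorm p (A $$ (i, j)) \<le> (\<Sum>j<n. pnorm p (A $$ (i, j)))"
    using ij by (intro member_le_sum) (auto simp: pnorm_nonneg)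
  also have "\<dots> \<le> (\<Sum>i<m. \<Sum>j<n. pnorm p (A $$ (i, j)))"
    using ij by (intro member_le_sum[of i "{..<m}" "\<lambda>i. \<Sum>j<n. pnorm p (A $$ (i, j))"]) (auto simp: pnorm_nonneg sum_nonneg)
  finally show ?thesis .
qed

lemma bnd_const: "\<exists>B (N::nat). \<forall>k\<ge>N. \<forall>i<m. \<forall>j<n. pnorm p (A $$ (i, j)) \<le> (B::real)"
proof (intro exI[of _ "\<Sum>i<m. \<Sum>j<n. pnorm p (A $$ (i, j))"] exI[of _ 0] allI impI)
  fix k :: nat and i j assume "k \<ge> 0" "i < m" "j < n"
  thus "pnorm p (A $$ (i, j)) \<le> (\<Sum>i<m. \<Sum>j<n. pnorm p (A $$ (i, j)))" using entry_le_sum by blast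
qed

lemma integral_mult:
  assumes p: "prime p" and X: "\<And>k. X k \<in> carrier_mat m n" and Y: "\<And>k. Y k \<in> carrier_mat n r"
    and iX: "padic_integral p m n X" and iY: "padic_integral p n r Y"
  shows "padic_integral p m r (\<lambda>k. X k * Y k)"
proof -
  obtain N1 where N1: "\<forall>k\<ge>N1. \<forall>i<m. \<forall>j<n. pnorm p (X k $$ (i, j)) \<le> 1" using iX unfolding padic_integral_def by blast
  obtain N2 where N2: "\<forall>k\<ge>N2. \<forall>i<n. \<forall>j<r. pnorm p (Y k $$ (i, j)) \<le> 1" using iY unfolding padic_integral_def by blast
  show ?thesis unfolding padic_integral_def
  proof (intro exI[of _ "max N1 N2"] allI impI)
    fix k i j assume k: "k \<ge> max N1 N2" and ij: "i < m" "j < r"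
    show "pnorm p ((X k * Y k) $$ (i, j)) \<le> 1" unfolding mult_entry[OF X Y ij]
    proof (rule pnorm_sum[OF p], simp, simp)
      fix l assume l: "l \<in> {..<n}"
      have "pnorm p (X k $$ (i, l)) \<le> 1" "pnorm p (Y k $$ (l, j)) \<le> 1" using N1 N2 k l ij by auto
      thus "pnorm p (X k $$ (i, l) * Y k $$ (l, j)) \<le> 1" unfolding pnorm_mult[OF p]
        using pnorm_nonneg by (intro mult_le_one) auto
    qed
  qed
qed

lemma integral_transpose:
  assumes X: "\<And>k. X k \<in> carrier_mat m n" and iX: "padic_integral p m n X"
  shows "padic_integral p n m (\<lambda>k. transpose_mat (X k))"
proof -
  obtain N where N: "\<forall>k\<ge>N. \<forall>i<m. \<forall>j<n. pnorm p (X k $$ (i, j)) \<le> 1" using iX unfolding padic_integral_def by blast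
  show ?thesis unfolding padic_integral_def
  proof (intro exI[of _ N] allI impI)
    fix k i j assume "k \<ge> N" "i < n" "j < m"
    thus "pnorm p (transpose_mat (X k) $$ (i, j)) \<le> 1" using N X[of k] by auto
  qed
qed

lemma integral_int:
  assumes p: "prime p" and G: "G \<in> carrier_mat m n"
  shows "padic_integral p m n (\<lambda>k. map_mat rat_of_int G)"
  unfolding padic_integral_def
proof (intro exI[of _ 0] allI impI)
  fix k i j :: nat assume "k \<ge> 0" "i < m" "j < n"
  thus "pnorm p (map_mat rat_of_int G $$ (i, j)) \<le> 1" using G pnorm_int[OF p] by simp
qed

lemma limit_integral:
  assumes p: "prime p" and e: "padic_eq p m n (\<lambda>k. A) T" and iT: "padic_integral p m n T"
    and ij: "i < m" "j < n"
  shows "pnorm p (A $$ (i, j)) \<le> 1"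
proof -
  from iT obtain N1 where N1: "\<forall>k\<ge>N1. \<forall>i<m. \<forall>j<n. pnorm p (T k $$ (i, j)) \<le> 1" unfolding padic_integral_def by (rule exE)
  have "padic_null_seq p (\<lambda>k. A $$ (i, j) - T k $$ (i, j))" using e[unfolded padic_eq_def, rule_format, OF ij] .
  hence "\<forall>\<epsilon>>0. \<exists>N. \<forall>k\<ge>N. pnorm p (A $$ (i, j) - T k $$ (i, j)) < \<epsilon>" unfolding padic_null_seq_def .
  from this[rule_format, of 1] obtain N2 where N2: "\<forall>k\<ge>N2. pnorm p (A $$ (i, j) - T k $$ (i, j)) < 1"
    by auto
  let ?k = "max N1 N2"
  have a: "pnorm p (A $$ (i, j) - T ?k $$ (i, j)) < 1" using N2 by simp
  have b: "pnorm p (T ?k $$ (i, j)) \<le> 1" using N1 ij by simp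
  have "A $$ (i, j) = (A $$ (i, j) - T ?k $$ (i, j)) + T ?k $$ (i, j)" by simp
  hence "pnorm p (A $$ (i, j)) = pnorm p ((A $$ (i, j) - T ?k $$ (i, j)) + T ?k $$ (i, j))" by (rule arg_cong)
  also have "\<dots> \<le> max (pnorm p (A $$ (i, j) - T ?k $$ (i, j))) (pnorm p (T ?k $$ (i, j)))" by (rule pnorm_add[OF p])
  also have "\<dots> \<le> 1" using a b by simp
  finally show ?thesis .
qed


theorem lemma3p2:
  fixes d p :: nat and v :: "int vec" and gv :: "int mat" and gvi :: "rat mat"
    and h c1 c2 :: "nat \<Rightarrow> rat mat" and \<gamma>1 \<gamma>2 \<gamma>2i :: "rat mat"
  assumes prim: "primitive_vec d v"
    and p: "prime p"
    and gv: "is_gv d v gv"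
    and gvi: "gvi \<in> carrier_mat d d" "gvi * map_mat rat_of_int gv = 1\<^sub>m d"
             "map_mat rat_of_int gv * gvi = 1\<^sub>m d"
    and h: "H_Qp p d v h"
    and c1: "SO_Zp p d c1" and \<gamma>1: "SO_Zinvp p d \<gamma>1"
    and dec1: "padic_eq p d d h (\<lambda>k. c1 k * \<gamma>1)"
    and c2: "ASL_Zp p d c2" and \<gamma>2: "ASL_Zinvp p d \<gamma>2"
    and \<gamma>2i: "\<gamma>2i \<in> carrier_mat d d" "\<gamma>2 * \<gamma>2i = 1\<^sub>m d" "\<gamma>2i * \<gamma>2 = 1\<^sub>m d"
    and dec2: "padic_eq p d d (\<lambda>k. gvi * h k * map_mat rat_of_int gv) (\<lambda>k. c2 k * \<gamma>2i)"
  shows "\<exists>M :: int mat. M \<in> carrier_mat d d \<and> det M = 1 \<and>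
           \<gamma>1 * map_mat rat_of_int gv * \<gamma>2 = map_mat rat_of_int M"
proof -
  define G where "G = map_mat rat_of_int gv"
  define C where "C = (\<lambda>k. transpose_mat (c1 k))"
  have gvc: "gv \<in> carrier_mat d d" "det gv = 1" using gv unfolding is_gv_def by auto
  have Gc: "G \<in> carrier_mat d d" using gvc unfolding G_def by simp
  have c1c: "\<And>k. c1 k \<in> carrier_mat d d" using c1 unfolding SO_Zp_def SO_Qp_def padic_cauchy_def by auto
  have Cc: "\<And>k. C k \<in> carrier_mat d d" using c1c unfolding C_def by simp
  have hc: "\<And>k. h k \<in> carrier_mat d d" using h unfolding H_Qp_def SO_Qp_def padic_cauchy_def by auto
  have c2c: "\<And>k. c2 k \<in> carrier_mat d d" using c2 unfolding ASL_Zp_def ASL_Qp_def padic_cauchy_def by auto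
  have g1c: "\<gamma>1 \<in> carrier_mat d d" using \<gamma>1 unfolding SO_Zinvp_def by auto
  have g2c: "\<gamma>2 \<in> carrier_mat d d" using \<gamma>2 unfolding ASL_Zinvp_def by auto
  have iC: "padic_integral p d d C" unfolding C_def
    by (rule integral_transpose[OF c1c]) (use c1 in \<open>simp add: SO_Zp_def\<close>)
  have ic2: "padic_integral p d d c2" using c2 unfolding ASL_Zp_def by simp
  have iG: "padic_integral p d d (\<lambda>k. G)" unfolding G_def by (rule integral_int[OF p gvc(1)])
  have O: "padic_eq p d d (\<lambda>k. C k * c1 k) (\<lambda>k. 1\<^sub>m d)"
    using c1 unfolding SO_Zp_def SO_Qp_def C_def by simp
  have S2: "padic_eq p d d (\<lambda>k. C k * c1 k * \<gamma>1) (\<lambda>k. 1\<^sub>m d * \<gamma>1)"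
    by (rule eq_mult_right[OF p _ _ _ O bnd_const]) (use Cc c1c g1c in \<open>auto intro!: mult_carrier_mat\<close>)
  have r1: "(\<lambda>k. C k * c1 k * \<gamma>1) = (\<lambda>k. C k * (c1 k * \<gamma>1))"
    by (intro ext assoc_mult_mat[OF Cc c1c g1c])
  have r2: "(\<lambda>k. 1\<^sub>m d * \<gamma>1) = (\<lambda>k. \<gamma>1)" using g1c by simp
  have S3: "padic_eq p d d (\<lambda>k. C k * (c1 k * \<gamma>1)) (\<lambda>k. C k * h k)"
    by (rule eq_mult_left[OF p _ _ _ eq_sym[OF p dec1] bnd_integral[OF iC]]) (use Cc c1c g1c hc in \<open>auto intro!: mult_carrier_mat\<close>)
  have E1: "padic_eq p d d (\<lambda>k. \<gamma>1) (\<lambda>k. C k * h k)"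
    using eq_trans[OF p eq_sym[OF p S2[unfolded r1 r2]] S3] .
  have S4: "padic_eq p d d (\<lambda>k. \<gamma>1 * (G * \<gamma>2)) (\<lambda>k. C k * h k * (G * \<gamma>2))"
    by (rule eq_mult_right[OF p _ _ _ E1 bnd_const]) (use Cc hc g1c Gc g2c in \<open>auto intro!: mult_carrier_mat\<close>)
  have S5: "padic_eq p d d (\<lambda>k. G * (gvi * h k * G)) (\<lambda>k. G * (c2 k * \<gamma>2i))"
    by (rule eq_mult_left[OF p _ _ _ dec2[folded G_def] bnd_const]) (use Gc hc gvi c2c \<gamma>2i in \<open>auto intro!: mult_carrier_mat\<close>)
  have S6: "padic_eq p d d (\<lambda>k. G * (gvi * h k * G) * \<gamma>2) (\<lambda>k. G * (c2 k * \<gamma>2i) * \<gamma>2)"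
    by (rule eq_mult_right[OF p _ _ _ S5 bnd_const]) (use Gc hc gvi c2c \<gamma>2i g2c in \<open>auto intro!: mult_carrier_mat\<close>)
  have Ggvi: "G * (gvi * X) = X" if X: "X \<in> carrier_mat d n" for X n
  proof -
    have "G * (gvi * X) = (G * gvi) * X" by (rule assoc_mult_mat[OF Gc gvi(1) X, symmetric])
    also have "\<dots> = X" using gvi(3) X unfolding G_def by simp
    finally show ?thesis .
  qed
  have r3: "(\<lambda>k. G * (gvi * h k * G) * \<gamma>2) = (\<lambda>k. h k * (G * \<gamma>2))"
  proof
    fix k
    have ghc: "gvi * h k \<in> carrier_mat d d" using gvi(1) hc by (rule mult_carrier_mat)
    have ghgc: "gvi * h k * G \<in> carrier_mat d d" using ghc Gc by (rule mult_carrier_mat)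
    have gg: "G * \<gamma>2 \<in> carrier_mat d d" using Gc g2c by (rule mult_carrier_mat)
    have a1: "(gvi * h k * G) * \<gamma>2 = gvi * h k * (G * \<gamma>2)" by (rule assoc_mult_mat[OF ghc Gc g2c])
    have a2: "gvi * h k * (G * \<gamma>2) = gvi * (h k * (G * \<gamma>2))" by (rule assoc_mult_mat[OF gvi(1) hc gg])
    have "G * (gvi * h k * G) * \<gamma>2 = G * ((gvi * h k * G) * \<gamma>2)" by (rule assoc_mult_mat[OF Gc ghgc g2c])
    also have "\<dots> = G * (gvi * (h k * (G * \<gamma>2)))" unfolding a1 a2 ..
    also have "\<dots> = h k * (G * \<gamma>2)" by (rule Ggvi[OF mult_carrier_mat[OF hc gg]])
    finally show "G * (gvi * h k * G) * \<gamma>2 = h k * (G * \<gamma>2)" .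
  qed
  have r4: "(\<lambda>k. G * (c2 k * \<gamma>2i) * \<gamma>2) = (\<lambda>k. G * c2 k)"
  proof
    fix k
    have cc: "c2 k * \<gamma>2i \<in> carrier_mat d d" using c2c \<gamma>2i(1) by (rule mult_carrier_mat)
    have a1: "c2 k * \<gamma>2i * \<gamma>2 = c2 k * (\<gamma>2i * \<gamma>2)" by (rule assoc_mult_mat[OF c2c \<gamma>2i(1) g2c])
    have "G * (c2 k * \<gamma>2i) * \<gamma>2 = G * (c2 k * \<gamma>2i * \<gamma>2)" by (rule assoc_mult_mat[OF Gc cc g2c])
    also have "\<dots> = G * (c2 k * (\<gamma>2i * \<gamma>2))" unfolding a1 ..
    also have "\<dots> = G * c2 k" using \<gamma>2i(3) c2c[of k] by simp
    finally show "G * (c2 k * \<gamma>2i) * \<gamma>2 = G * c2 k" .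
  qed
  have S7: "padic_eq p d d (\<lambda>k. C k * (h k * (G * \<gamma>2))) (\<lambda>k. C k * (G * c2 k))"
    by (rule eq_mult_left[OF p _ _ _ S6[unfolded r3 r4] bnd_integral[OF iC]]) (use Cc hc Gc g2c c2c in \<open>auto intro!: mult_carrier_mat\<close>)
  have r5: "(\<lambda>k. C k * h k * (G * \<gamma>2)) = (\<lambda>k. C k * (h k * (G * \<gamma>2)))"
    by (intro ext assoc_mult_mat[OF Cc hc mult_carrier_mat[OF Gc g2c]])
  have F: "padic_eq p d d (\<lambda>k. \<gamma>1 * (G * \<gamma>2)) (\<lambda>k. C k * (G * c2 k))"
    using eq_trans[OF p S4[unfolded r5] S7] .
  have iT: "padic_integral p d d (\<lambda>k. C k * (G * c2 k))"
    by (rule integral_mult[OF p Cc _ iC integral_mult[OF p _ c2c iG ic2]]) (use Gc c2c in \<open>auto intro!: mult_carrier_mat\<close>)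
  define A where "A = \<gamma>1 * (G * \<gamma>2)"
  have Ac: "A \<in> carrier_mat d d" unfolding A_def using g1c Gc g2c by auto
  have Aeq: "\<gamma>1 * G * \<gamma>2 = A" unfolding A_def by (rule assoc_mult_mat[OF g1c Gc g2c])
  have nA: "\<forall>i<d. \<forall>j<d. pnorm p (A $$ (i, j)) \<le> 1"
    unfolding A_def using limit_integral[OF p F iT] by blast
  have zG: "\<forall>i<d. \<forall>j<d. in_Zinvp p (G $$ (i, j))" using gvc unfolding G_def by (auto intro: Zinvp_int_in)
  have zA: "\<forall>i<d. \<forall>j<d. in_Zinvp p (A $$ (i, j))" unfolding A_def
    by (rule mat_Zinvp[OF p g1c _ _ mat_Zinvp[OF p Gc g2c zG]]) (use g1c Gc g2c \<gamma>1 \<gamma>2 in \<open>auto simp: SO_Zinvp_def ASL_Zinvp_def\<close>)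
  have intA: "\<forall>i<d. \<forall>j<d. \<exists>n::int. A $$ (i, j) = of_int n"
    using Zinvp_int[OF p] zA nA by blast
  define M where "M = mat d d (\<lambda>(i, j). \<lfloor>A $$ (i, j)\<rfloor>)"
  have Mc: "M \<in> carrier_mat d d" unfolding M_def by simp
  have MA: "map_mat rat_of_int M = A"
  proof (rule eq_matI)
    fix i j assume ij: "i < dim_row A" "j < dim_col A"
    then obtain n :: int where n: "A $$ (i, j) = of_int n" using intA Ac by auto
    show "map_mat rat_of_int M $$ (i, j) = A $$ (i, j)" using ij Ac n unfolding M_def by simp
  qed (use Ac Mc in \<open>auto intro!: mult_carrier_mat\<close>)
  have "det A = det \<gamma>1 * (det G * det \<gamma>2)" unfolding A_def
    using g1c Gc g2c by (simp add: det_mult[of _ d])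
  also have "\<dots> = 1" using \<gamma>1 \<gamma>2 gvc unfolding SO_Zinvp_def ASL_Zinvp_def G_def
    by (simp add: of_int_hom.hom_det)
  finally have "rat_of_int (det M) = 1" using MA by (metis of_int_hom.hom_det)
  hence "det M = 1" by simp
  thus ?thesis using Mc MA Aeq unfolding G_def by blast
qed

end
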